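(* Let $\zeta\in(0,\infty)$ and for each $n\in\mathbb N$ let $(h_n,w^{(n)})\in\boldsymbol\Sigma([0,\zeta])$, converging to $(h,w)$ in $\mathbf C([0,\zeta],\mathbb R)\times\mathbf C([0,\zeta],\mathbf C_0)$ for the metric $\Delta$. Then $\lim_{n\to\infty}\lVert d_{h_n}-d_h\rVert=\lim_{n\to\infty}\lVert d_{h_n,w^{(n)}}-d_{h,w}\rVert=0$, where $\lVert\cdot\rVert$ is the uniform norm on $[0,\zeta]^2$.
   Context: $\mathbf C_0$: continuous functions $[0,\infty)\to\mathbb R$ with metric $\delta_{\mathtt u}(w,w')=\sum_{n\ge0}2^{-n-1}\min(1,\sup_{[0,n]}|w-w'|)$. $\Delta((h,w),(h',w'))=\sup_{[0,\zeta]}|h-h'|+\sup_{s\in[0,\zeta]}\delta_{\mathtt u}(w_s,w'_s)$. A snake $(h,w)\in\boldsymbol\Sigma([0,\zeta])$: $h\in\mathbf C([0,\zeta],\mathbb R)$, $h\ge0$, $h(0)=h(\zeta)=0$, $s\mapsto w_s\in\mathbf C_0$ continuous, with $w_s(r)=w_s(h(s))=:\widehat w_s$ for $r\ge h(s)$, and $w_{s_1}(r)=w_{s_2}(r)$ for all $r\in[0,m_h(s_1,s_2)]$, where $m_h(s_1,s_2)=\min_{[s_1\wedge s_2,s_1\vee s_2]}h$. Tree pseudo-metric $d_h(s_1,s_2)=h(s_1)+h(s_2)-2m_h(s_1,s_2)$. Snake metric: $M_{h,w}(s_1,s_2)=\min\big(\min_{r\in[m_h(s_1,s_2),h(s_1)]}w_{s_1}(r),\min_{r\in[m_h(s_1,s_2),h(s_2)]}w_{s_2}(r)\big)$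 and $d_{h,w}(s_1,s_2)=\widehat w_{s_1}+\widehat w_{s_2}-2M_{h,w}(s_1,s_2)$. *)

theory Defs
  imports "HOL-Analysis.Analysis"
begin

text \<open>Elements of C_0 are represented as functions real => real, continuous on [0,oo).
  Paths s |-> w_s are functions real => (real => real); only values on [0,zeta] matter.\<close>

definition C0 :: "(real \<Rightarrow> real) \<Rightarrow> bool" where
  "C0 v \<longleftrightarrow> continuous_on {0..} v"

definition delta_u :: "(real \<Rightarrow> real) \<Rightarrow> (real \<Rightarrow> real) \<Rightarrow> real" where
  "delta_u v v' = (\<Sum>n. (1/2) ^ (n+1) * min 1 (SUP r\<in>{0..real n}. \<bar>v r - v' r\<bar>))"

definition path_cont :: "real \<Rightarrow> (real \<Rightarrow> real \<Rightarrow> real) \<Rightarrow> bool" where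
  "path_cont \<zeta> w \<longleftrightarrow> (\<forall>s\<in>{0..\<zeta>}. \<forall>e>0. \<exists>d>0. \<forall>s'\<in>{0..\<zeta>}.
      \<bar>s' - s\<bar> < d \<longrightarrow> delta_u (w s') (w s) < e)"

definition Delta :: "real \<Rightarrow> (real \<Rightarrow> real) \<times> (real \<Rightarrow> real \<Rightarrow> real)
    \<Rightarrow> (real \<Rightarrow> real) \<times> (real \<Rightarrow> real \<Rightarrow> real) \<Rightarrow> real" where
  "Delta \<zeta> p q = (SUP s\<in>{0..\<zeta>}. \<bar>fst p s - fst q s\<bar>)
                 + (SUP s\<in>{0..\<zeta>}. delta_u (snd p s) (snd q s))"

definition m_h :: "(real \<Rightarrow> real) \<Rightarrow> real \<Rightarrow> real \<Rightarrow> real" where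
  "m_h h s1 s2 = (INF t\<in>{min s1 s2..max s1 s2}. h t)"

definition d_tree :: "(real \<Rightarrow> real) \<Rightarrow> real \<Rightarrow> real \<Rightarrow> real" where
  "d_tree h s1 s2 = h s1 + h s2 - 2 * m_h h s1 s2"

definition is_snake :: "real \<Rightarrow> (real \<Rightarrow> real) \<Rightarrow> (real \<Rightarrow> real \<Rightarrow> real) \<Rightarrow> bool" where
  "is_snake \<zeta> h w \<longleftrightarrow>
     continuous_on {0..\<zeta>} h \<and> (\<forall>s\<in>{0..\<zeta>}. h s \<ge> 0) \<and> h 0 = 0 \<and> h \<zeta> = 0 \<and>
     (\<forall>s\<in>{0..\<zeta>}. C0 (w s)) \<and> path_cont \<zeta> w \<and>
     (\<forall>s\<in>{0..\<zeta>}. \<forall>r\<ge>h s. w s r = w s (h s)) \<and>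
     (\<forall>s1\<in>{0..\<zeta>}. \<forall>s2\<in>{0..\<zeta>}. \<forall>r\<in>{0..m_h h s1 s2}. w s1 r = w s2 r)"

definition M_hw :: "(real \<Rightarrow> real) \<Rightarrow> (real \<Rightarrow> real \<Rightarrow> real) \<Rightarrow> real \<Rightarrow> real \<Rightarrow> real" where
  "M_hw h w s1 s2 = min (INF r\<in>{m_h h s1 s2..h s1}. w s1 r) (INF r\<in>{m_h h s1 s2..h s2}. w s2 r)"

definition d_snake :: "(real \<Rightarrow> real) \<Rightarrow> (real \<Rightarrow> real \<Rightarrow> real) \<Rightarrow> real \<Rightarrow> real \<Rightarrow> real" where
  "d_snake h w s1 s2 = w s1 (h s1) + w s2 (h s2) - 2 * M_hw h w s1 s2"

end

theory Submission
  imports Defs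
begin

lemma cont_bdd:
  fixes f :: "real \<Rightarrow> real"
  assumes "continuous_on S f" "{a..b} \<subseteq> S"
  shows "bdd_below (f ` {a..b})" "bdd_above (f ` {a..b})"
proof -
  have "continuous_on {a..b} f" using assms continuous_on_subset by blast
  hence "compact (f ` {a..b})" by (rule compact_continuous_image[OF _ compact_Icc])
  hence "bounded (f ` {a..b})" by (rule compact_imp_bounded)
  thus "bdd_below (f ` {a..b})" "bdd_above (f ` {a..b})"
    by (auto intro: bounded_imp_bdd_below bounded_imp_bdd_above)
qed

lemma inf_same:
  fixes f g :: "real \<Rightarrow> real"
  assumes "a \<le> b" "bdd_below (f ` {a..b})" "bdd_below (g ` {a..b})"
    "\<forall>x\<in>{a..b}. \<bar>f x - g x\<bar> \<le> e"
  shows "\<bar>(INF x\<in>{a..b}. f x) - (INF x\<in>{a..b}. g x)\<bar> \<le> e"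
proof -
  have ne: "{a..b} \<noteq> {}" using assms by auto
  have 1: "(INF x\<in>{a..b}. f x) - e \<le> (INF x\<in>{a..b}. g x)"
  proof (rule cINF_greatest[OF ne])
    fix x assume x: "x \<in> {a..b}"
    have "(INF x\<in>{a..b}. f x) \<le> f x" by (rule cINF_lower[OF assms(2) x])
    thus "(INF x\<in>{a..b}. f x) - e \<le> g x" using assms(4) x by force
  qed
  have 2: "(INF x\<in>{a..b}. g x) - e \<le> (INF x\<in>{a..b}. f x)"
  proof (rule cINF_greatest[OF ne])
    fix x assume x: "x \<in> {a..b}"
    have "(INF x\<in>{a..b}. g x) \<le> g x" by (rule cINF_lower[OF assms(3) x])
    thus "(INF x\<in>{a..b}. g x) - e \<le> f x" using assms(4) x by force
  qed
  show ?thesis using 1 2 by linarith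
qed

lemma inf_close:
  fixes f g :: "real \<Rightarrow> real"
  assumes ab: "a \<le> b" "a' \<le> b'" and sub: "0 \<le> a" "b \<le> K" "0 \<le> a'" "b' \<le> K"
    and d: "\<bar>a - a'\<bar> < \<delta>" "\<bar>b - b'\<bar> < \<delta>"
    and bf: "bdd_below (f ` {a..b})" and bg: "bdd_below (g ` {a'..b'})"
    and md: "\<forall>x\<in>{0..K}. \<forall>y\<in>{0..K}. \<bar>x - y\<bar> < \<delta> \<longrightarrow> \<bar>f x - f y\<bar> < \<epsilon>"
    and cl: "\<forall>x\<in>{0..K}. \<bar>g x - f x\<bar> \<le> \<epsilon>"
  shows "\<bar>(INF x\<in>{a'..b'}. g x) - (INF x\<in>{a..b}. f x)\<bar> \<le> 2*\<epsilon>"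
proof -
  have dp: "\<delta> > 0" using d(1) by linarith
  have 1: "(INF x\<in>{a..b}. f x) - 2*\<epsilon> \<le> (INF x\<in>{a'..b'}. g x)"
  proof (rule cINF_greatest)
    show "{a'..b'} \<noteq> {}" using ab by auto
    fix r assume r: "r \<in> {a'..b'}"
    define c where "c = max a (min b r)"
    have c: "c \<in> {a..b}" using ab unfolding c_def by auto
    have "\<bar>c - r\<bar> < \<delta>" using r d ab dp unfolding c_def by (auto simp: max_def min_def abs_if)
    hence "\<bar>f c - f r\<bar> < \<epsilon>" using md c r sub by auto
    moreover have "f c \<ge> (INF x\<in>{a..b}. f x)" using cINF_lower[OF bf c] .
    moreover have "\<bar>g r - f r\<bar> \<le> \<epsilon>" using cl r sub by auto
    ultimately show "(INF x\<in>{a..b}. f x) - 2*\<epsilon> \<le> g r" by linarith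
  qed
  have 2: "(INF x\<in>{a'..b'}. g x) - 2*\<epsilon> \<le> (INF x\<in>{a..b}. f x)"
  proof (rule cINF_greatest)
    show "{a..b} \<noteq> {}" using ab by auto
    fix r assume r: "r \<in> {a..b}"
    define c where "c = max a' (min b' r)"
    have c: "c \<in> {a'..b'}" using ab unfolding c_def by auto
    have "\<bar>c - r\<bar> < \<delta>" using r d ab dp unfolding c_def by (auto simp: max_def min_def abs_if)
    hence "\<bar>f c - f r\<bar> < \<epsilon>" using md c r sub by auto
    moreover have "g c \<ge> (INF x\<in>{a'..b'}. g x)" using cINF_lower[OF bg c] .
    moreover have "\<bar>g c - f c\<bar> \<le> \<epsilon>" using cl c sub by auto
    ultimately show "(INF x\<in>{a'..b'}. g x) - 2*\<epsilon> \<le> f r" by linarith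
  qed
  show ?thesis using 1 2 by linarith
qed

lemma C0_bdd_diff:
  assumes "C0 v" "C0 v'"
  shows "bdd_above ((\<lambda>r. \<bar>v r - v' r\<bar>) ` {0..x})"
proof -
  have "continuous_on {0..} (\<lambda>r. \<bar>v r - v' r\<bar>)"
    using assms unfolding C0_def by (intro continuous_intros) auto
  thus ?thesis by (rule cont_bdd(2)) auto
qed

lemma delta_u_props:
  assumes "C0 v" "C0 v'"
  shows "0 \<le> delta_u v v'" "delta_u v v' \<le> 1"
    "\<And>k r. r \<in> {0..real k} \<Longrightarrow> 2^(k+1) * delta_u v v' < 1
       \<Longrightarrow> \<bar>v r - v' r\<bar> \<le> 2^(k+1) * delta_u v v'"
proof -
  define S where "S k = (SUP r\<in>{0..real k}. \<bar>v r - v' r\<bar>)" for k :: nat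
  define t where "t k = (1/2::real)^(k+1) * min 1 (S k)" for k
  have du: "delta_u v v' = suminf t" unfolding delta_u_def t_def S_def by simp
  have le: "\<bar>v r - v' r\<bar> \<le> S k" if "r \<in> {0..real k}" for r k
    unfolding S_def by (rule cSUP_upper[OF that C0_bdd_diff[OF assms]])
  have S0: "0 \<le> S k" for k using le[of 0 k] by force
  have t0: "0 \<le> t k" for k unfolding t_def using S0 by simp
  have tle: "t k \<le> (1/2)^(k+1)" for k unfolding t_def
    using mult_left_mono[of "min 1 (S k)" 1 "(1/2::real)^(k+1)"] by simp
  have gs: "(\<lambda>k. (1/2::real)^(k+1)) sums 1"
  proof -
    have "(\<lambda>k. (1/2::real)^k) sums (1 / (1 - 1/2))" by (rule geometric_sums) simp
    hence "(\<lambda>k. (1/2) * (1/2::real)^k) sums ((1/2) * (1 / (1 - 1/2)))" by (rule sums_mult)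
    thus ?thesis by simp
  qed
  have st: "summable t"
    by (rule summable_comparison_test'[OF sums_summable[OF gs]]) (use t0 tle in auto)
  show "0 \<le> delta_u v v'" using du suminf_nonneg[OF st] t0 by simp
  show "delta_u v v' \<le> 1" using du suminf_le[OF tle st sums_summable[OF gs]] sums_unique[OF gs] by simp
  fix k r assume r: "r \<in> {0..real k}" and lt: "2^(k+1) * delta_u v v' < 1"
  have "t k \<le> suminf t" using sum_le_suminf[OF st, of "{k}"] t0 by simp
  have e: "(2::real)^(k+1) * (1/2)^(k+1) = 1" by (simp add: power_mult_distrib[symmetric])
  have "min 1 (S k) = 2^(k+1) * t k" unfolding t_def using e by (simp add: mult.assoc[symmetric])
  also have "\<dots> \<le> 2^(k+1) * delta_u v v'" using \<open>t k \<le> suminf t\<close> du by simp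
  finally have "min 1 (S k) \<le> 2^(k+1) * delta_u v v'" .
  hence "S k \<le> 2^(k+1) * delta_u v v'" using lt by (auto simp: min_def split: if_splits)
  thus "\<bar>v r - v' r\<bar> \<le> 2^(k+1) * delta_u v v'" using le[OF r] by linarith
qed

lemma conv0:
  fixes X :: "nat \<Rightarrow> real"
  assumes "\<And>\<epsilon>. \<epsilon> > 0 \<Longrightarrow> \<exists>N. \<forall>n\<ge>N. 0 \<le> X n \<and> X n \<le> \<epsilon>"
  shows "X \<longlonglongrightarrow> 0"
proof (rule LIMSEQ_I)
  fix r :: real assume "0 < r"
  then obtain N where "\<forall>n\<ge>N. 0 \<le> X n \<and> X n \<le> r/2" using assms[of "r/2"] by auto
  thus "\<exists>no. \<forall>n\<ge>no. norm (X n - 0) < r" using \<open>0 < r\<close> by force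
qed

lemma sup_small:
  fixes F :: "'a \<Rightarrow> real"
  assumes "A \<noteq> {}" "\<And>p. p \<in> A \<Longrightarrow> 0 \<le> F p \<and> F p \<le> c"
  shows "0 \<le> (SUP p\<in>A. F p) \<and> (SUP p\<in>A. F p) \<le> c"
proof -
  have bdd: "bdd_above (F ` A)" using assms(2) by (intro bdd_aboveI2) blast
  obtain p where p: "p \<in> A" using assms(1) by auto
  have "F p \<le> (SUP p\<in>A. F p)" by (rule cSUP_upper[OF p bdd])
  moreover have "(SUP p\<in>A. F p) \<le> c" by (rule cSUP_least[OF assms(1)]) (use assms(2) in auto)
  ultimately show ?thesis using assms(2)[OF p] by linarith
qed

theorem lemma4p20:
  fixes \<zeta> :: real
    and hn :: "nat \<Rightarrow> real \<Rightarrow> real" and wn :: "nat \<Rightarrow> real \<Rightarrow> real \<Rightarrow> real"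
    and h :: "real \<Rightarrow> real" and w :: "real \<Rightarrow> real \<Rightarrow> real"
  assumes "\<zeta> > 0"
    and "\<And>n. is_snake \<zeta> (hn n) (wn n)"
    and "continuous_on {0..\<zeta>} h"
    and "\<forall>s\<in>{0..\<zeta>}. C0 (w s)" and "path_cont \<zeta> w"
    and "(\<lambda>n. Delta \<zeta> (hn n, wn n) (h, w)) \<longlonglongrightarrow> 0"
  shows "((\<lambda>n. SUP p\<in>{0..\<zeta>}\<times>{0..\<zeta>}. \<bar>d_tree (hn n) (fst p) (snd p) - d_tree h (fst p) (snd p)\<bar>)
            \<longlonglongrightarrow> 0) \<and>
         ((\<lambda>n. SUP p\<in>{0..\<zeta>}\<times>{0..\<zeta>}.
              \<bar>d_snake (hn n) (wn n) (fst p) (snd p) - d_snake h w (fst p) (snd p)\<bar>) \<longlonglongrightarrow> 0)"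
proof -
  have hnc: "continuous_on {0..\<zeta>} (hn n)" for n using assms(2)[of n] unfolding is_snake_def by blast
  have hn0: "\<forall>s\<in>{0..\<zeta>}. hn n s \<ge> 0" for n using assms(2)[of n] unfolding is_snake_def by blast
  have wnC0: "\<forall>s\<in>{0..\<zeta>}. C0 (wn n s)" for n using assms(2)[of n] unfolding is_snake_def by blast
  define eh where "eh n = (SUP s\<in>{0..\<zeta>}. \<bar>hn n s - h s\<bar>)" for n
  define ew where "ew n = (SUP s\<in>{0..\<zeta>}. delta_u (wn n s) (w s))" for n
  have Dl: "Delta \<zeta> (hn n, wn n) (h, w) = eh n + ew n" for n
    unfolding Delta_def eh_def ew_def by simp
  have ehb: "\<bar>hn n s - h s\<bar> \<le> eh n" if "s \<in> {0..\<zeta>}" for n s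
  proof -
    have "continuous_on {0..\<zeta>} (\<lambda>s. \<bar>hn n s - h s\<bar>)"
      using hnc assms(3) by (intro continuous_intros)
    hence "bdd_above ((\<lambda>s. \<bar>hn n s - h s\<bar>) ` {0..\<zeta>})" by (rule cont_bdd(2)) auto
    thus ?thesis unfolding eh_def by (rule cSUP_upper[OF that])
  qed
  have eh0: "0 \<le> eh n" for n using ehb[of 0 n] assms(1) by force
  have ewb: "delta_u (wn n s) (w s) \<le> ew n" if "s \<in> {0..\<zeta>}" for n s
  proof -
    have "bdd_above ((\<lambda>s. delta_u (wn n s) (w s)) ` {0..\<zeta>})"
      by (rule bdd_aboveI2[where M=1]) (use delta_u_props(2) wnC0 assms(4) in blast)
    thus ?thesis unfolding ew_def by (rule cSUP_upper[OF that])
  qed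
  have ew0: "0 \<le> ew n" for n
    using ewb[of 0 n] assms(1) delta_u_props(1)[of "wn n 0" "w 0"] wnC0 assms(4) by force
  have ehl: "eh \<longlonglongrightarrow> 0"
    by (rule tendsto_sandwich[of "\<lambda>_. 0" _ _ "\<lambda>n. Delta \<zeta> (hn n, wn n) (h, w)"])
       (use eh0 ew0 Dl assms(6) in auto)
  have ewl: "ew \<longlonglongrightarrow> 0"
    by (rule tendsto_sandwich[of "\<lambda>_. 0" _ _ "\<lambda>n. Delta \<zeta> (hn n, wn n) (h, w)"])
       (use eh0 ew0 Dl assms(6) in auto)
  have h0: "0 \<le> h s" if s: "s \<in> {0..\<zeta>}" for s
  proof (rule ccontr)
    assume "\<not> 0 \<le> h s"
    then obtain n where "norm (eh n - 0) < - h s" using LIMSEQ_D[OF ehl, of "- h s"] by force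
    hence "eh n < - h s" by simp
    moreover have "hn n s \<ge> 0" using hn0[of n] s by auto
    ultimately show False using ehb[OF s, of n] by linarith
  qed
  have mbd: "bdd_below (f ` {min s1 s2..max s1 s2})" if "continuous_on {0..\<zeta>} f"
      "s1 \<in> {0..\<zeta>}" "s2 \<in> {0..\<zeta>}" for f :: "real \<Rightarrow> real" and s1 s2
    by (rule cont_bdd(1)[OF that(1)]) (use that in auto)
  have mprops: "0 \<le> m_h f s1 s2 \<and> m_h f s1 s2 \<le> f s1 \<and> m_h f s1 s2 \<le> f s2"
    if "continuous_on {0..\<zeta>} f" "\<forall>s\<in>{0..\<zeta>}. 0 \<le> f s"
      "s1 \<in> {0..\<zeta>}" "s2 \<in> {0..\<zeta>}" for f :: "real \<Rightarrow> real" and s1 s2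
  proof -
    have b: "bdd_below (f ` {min s1 s2..max s1 s2})" using mbd[OF that(1,3,4)] .
    have "m_h f s1 s2 \<le> f s1" unfolding m_h_def by (rule cINF_lower[OF b]) auto
    moreover have "m_h f s1 s2 \<le> f s2" unfolding m_h_def by (rule cINF_lower[OF b]) auto
    moreover have "0 \<le> m_h f s1 s2" unfolding m_h_def
    proof (rule cINF_greatest)
      show "{min s1 s2..max s1 s2} \<noteq> {}" by auto
      fix x assume "x \<in> {min s1 s2..max s1 s2}"
      hence "x \<in> {0..\<zeta>}" using that(3,4) by (auto simp: min_def max_def split: if_splits)
      thus "0 \<le> f x" using that(2) by blast
    qed
    ultimately show ?thesis by blast
  qed
  have mclose: "\<bar>m_h (hn n) s1 s2 - m_h h s1 s2\<bar> \<le> eh n"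
    if "s1 \<in> {0..\<zeta>}" "s2 \<in> {0..\<zeta>}" for n s1 s2
  proof -
    have sub: "{min s1 s2..max s1 s2} \<subseteq> {0..\<zeta>}" using that by (auto simp: min_def max_def)
    show ?thesis unfolding m_h_def
    proof (rule inf_same)
      show "min s1 s2 \<le> max s1 s2" by simp
      show "bdd_below (hn n ` {min s1 s2..max s1 s2})" using mbd[OF hnc that] .
      show "bdd_below (h ` {min s1 s2..max s1 s2})" using mbd[OF assms(3) that] .
      show "\<forall>x\<in>{min s1 s2..max s1 s2}. \<bar>hn n x - h x\<bar> \<le> eh n"
        using ehb sub by blast
    qed
  qed
  have part1: "(\<lambda>n. SUP p\<in>{0..\<zeta>}\<times>{0..\<zeta>}. \<bar>d_tree (hn n) (fst p) (snd p) - d_tree h (fst p) (snd p)\<bar>)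
            \<longlonglongrightarrow> 0"
  proof (rule conv0)
    fix \<epsilon> :: real assume "\<epsilon> > 0"
    then obtain N where N: "\<forall>n\<ge>N. norm (eh n - 0) < \<epsilon>/4" using LIMSEQ_D[OF ehl, of "\<epsilon>/4"] by force
    show "\<exists>N. \<forall>n\<ge>N. 0 \<le> (SUP p\<in>{0..\<zeta>}\<times>{0..\<zeta>}. \<bar>d_tree (hn n) (fst p) (snd p) - d_tree h (fst p) (snd p)\<bar>) \<and>
       (SUP p\<in>{0..\<zeta>}\<times>{0..\<zeta>}. \<bar>d_tree (hn n) (fst p) (snd p) - d_tree h (fst p) (snd p)\<bar>) \<le> \<epsilon>"
    proof (intro exI allI impI)
      fix n assume n: "n \<ge> N"
      show "0 \<le> (SUP p\<in>{0..\<zeta>}\<times>{0..\<zeta>}. \<bar>d_tree (hn n) (fst p) (snd p) - d_tree h (fst p) (snd p)\<bar>) \<and>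
       (SUP p\<in>{0..\<zeta>}\<times>{0..\<zeta>}. \<bar>d_tree (hn n) (fst p) (snd p) - d_tree h (fst p) (snd p)\<bar>) \<le> \<epsilon>"
      proof (rule sup_small)
        show "{0..\<zeta>}\<times>{0..\<zeta>} \<noteq> {}" using assms(1) by auto
        fix p :: "real \<times> real" assume p: "p \<in> {0..\<zeta>}\<times>{0..\<zeta>}"
        have s1: "fst p \<in> {0..\<zeta>}" and s2: "snd p \<in> {0..\<zeta>}" using p by auto
        have "\<bar>d_tree (hn n) (fst p) (snd p) - d_tree h (fst p) (snd p)\<bar> \<le> 4 * eh n"
          using ehb[OF s1, of n] ehb[OF s2, of n] mclose[OF s1 s2, of n]
          unfolding d_tree_def by linarith
        thus "0 \<le> \<bar>d_tree (hn n) (fst p) (snd p) - d_tree h (fst p) (snd p)\<bar> \<and>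
          \<bar>d_tree (hn n) (fst p) (snd p) - d_tree h (fst p) (snd p)\<bar> \<le> \<epsilon>"
          using N n by auto
      qed
    qed
  qed

  obtain B where B: "\<forall>s\<in>{0..\<zeta>}. h s \<le> B"
    using cont_bdd(2)[OF assms(3), of 0 \<zeta>] unfolding bdd_above_def by auto
  define K :: nat where "K = nat \<lceil>B\<rceil> + 1"
  have KB: "B + 1 \<le> real K" unfolding K_def by linarith
  let ?T = "{0..\<zeta>} \<times> {0..real K}"
  have cF: "continuous_on ?T (\<lambda>p. w (fst p) (snd p))"
    unfolding continuous_on_iff
  proof (intro ballI allI impI)
    fix p and e :: real assume p: "p \<in> ?T" and e: "0 < e"
    obtain s r where pr: "p = (s, r)" by (cases p)
    have s: "s \<in> {0..\<zeta>}" and r: "r \<in> {0..real K}" using p pr by auto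
    have cs: "continuous_on {0..} (w s)" using assms(4) s unfolding C0_def by blast
    have "\<exists>d>0. \<forall>r'\<in>{0..}. dist r' r < d \<longrightarrow> dist (w s r') (w s r) < e/2"
    proof -
      have "r \<in> {0..}" using r by auto
      moreover have "e/2 > 0" using e by simp
      ultimately show ?thesis using cs unfolding continuous_on_iff by blast
    qed
    then obtain d2 where d2: "d2 > 0" "\<forall>r'\<in>{0..}. dist r' r < d2 \<longrightarrow> dist (w s r') (w s r) < e/2"
      by blast
    define c where "c = min (e/2) (1/2) / 2^(K+1)"
    have c0: "c > 0" unfolding c_def using e by simp
    have "\<exists>d>0. \<forall>s'\<in>{0..\<zeta>}. \<bar>s' - s\<bar> < d \<longrightarrow> delta_u (w s') (w s) < c"
      using assms(5) s c0 unfolding path_cont_def by blast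
    then obtain d1 where d1: "d1 > 0" "\<forall>s'\<in>{0..\<zeta>}. \<bar>s' - s\<bar> < d1 \<longrightarrow> delta_u (w s') (w s) < c"
      by blast
    show "\<exists>d>0. \<forall>p'\<in>?T. dist p' p < d \<longrightarrow> dist (w (fst p') (snd p')) (w (fst p) (snd p)) < e"
    proof (intro exI[of _ "min d1 d2"] conjI ballI impI)
      show "min d1 d2 > 0" using d1 d2 by simp
      fix p' assume p': "p' \<in> ?T" and dp: "dist p' p < min d1 d2"
      obtain s' r' where pr': "p' = (s', r')" by (cases p')
      have s': "s' \<in> {0..\<zeta>}" and r': "r' \<in> {0..real K}" using p' pr' by auto
      have "dist s' s < d1" using dist_fst_le[of p' p] dp pr pr' by simp
      hence "delta_u (w s') (w s) < c" using d1 s' by (simp add: dist_real_def)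
      hence lt: "2^(K+1) * delta_u (w s') (w s) < min (e/2) (1/2)"
        unfolding c_def by (simp add: field_simps)
      have "\<bar>w s' r' - w s r'\<bar> \<le> 2^(K+1) * delta_u (w s') (w s)"
        by (rule delta_u_props(3)) (use assms(4) s s' r' lt in auto)
      moreover have "dist r' r < d2" using dist_snd_le[of p' p] dp pr pr' by simp
      hence "\<bar>w s r' - w s r\<bar> < e/2" using d2 r' by (simp add: dist_real_def)
      moreover have "2^(K+1) * delta_u (w s') (w s) < e/2" using lt by linarith
      ultimately have "\<bar>w s' r' - w s r\<bar> < e" by linarith
      thus "dist (w (fst p') (snd p')) (w (fst p) (snd p)) < e"
        using pr pr' by (simp add: dist_real_def)
    qed
  qed
  have "uniformly_continuous_on ?T (\<lambda>p. w (fst p) (snd p))"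
    by (rule compact_uniformly_continuous[OF cF]) (intro compact_Times compact_Icc)
  hence uc: "\<exists>d>0. \<forall>s\<in>{0..\<zeta>}. \<forall>x\<in>{0..real K}. \<forall>y\<in>{0..real K}. \<bar>x - y\<bar> < d \<longrightarrow> \<bar>w s x - w s y\<bar> < e"
    if e0: "e > 0" for e
  proof -
    assume "uniformly_continuous_on ?T (\<lambda>p. w (fst p) (snd p))"
    then obtain d where d: "d > 0" "\<forall>x\<in>?T. \<forall>x'\<in>?T. dist x' x < d \<longrightarrow> dist (w (fst x') (snd x')) (w (fst x) (snd x)) < e"
      unfolding uniformly_continuous_on_def using e0 by blast
    show ?thesis
    proof (intro exI[of _ d] conjI ballI impI)
      fix s x y assume s: "s \<in> {0..\<zeta>}" and x: "x \<in> {0..real K}" and y: "y \<in> {0..real K}"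
        and xy: "\<bar>x - y\<bar> < d"
      have "dist (s, x) (s, y) < d" using xy by (simp add: dist_Pair_Pair dist_real_def)
      thus "\<bar>w s x - w s y\<bar> < e" using d(2) s x y by (force simp: dist_real_def)
    qed (use d in auto)
  qed
  have ewl2: "(\<lambda>n. 2^(K+1) * ew n) \<longlonglongrightarrow> 0"
    using tendsto_mult_right_zero[OF ewl, of "2^(K+1)"] by (simp add: mult.commute)
  have wclose: "\<bar>wn n s r - w s r\<bar> \<le> 2^(K+1) * ew n"
    if "2^(K+1) * ew n < 1" "s \<in> {0..\<zeta>}" "r \<in> {0..real K}" for n s r
  proof -
    have "2^(K+1) * delta_u (wn n s) (w s) \<le> 2^(K+1) * ew n" using ewb[OF that(2), of n] by simp
    hence lt: "2^(K+1) * delta_u (wn n s) (w s) < 1" using that(1) by linarith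
    have "C0 (wn n s)" "C0 (w s)" using that(2) wnC0 assms(4) by auto
    hence "\<bar>wn n s r - w s r\<bar> \<le> 2^(K+1) * delta_u (wn n s) (w s)"
      using delta_u_props(3)[of "wn n s" "w s" r K] that(3) lt by blast
    also have "\<dots> \<le> 2^(K+1) * ew n" using ewb[OF that(2), of n] by simp
    finally show ?thesis .
  qed
  have part2: "(\<lambda>n. SUP p\<in>{0..\<zeta>}\<times>{0..\<zeta>}.
              \<bar>d_snake (hn n) (wn n) (fst p) (snd p) - d_snake h w (fst p) (snd p)\<bar>) \<longlonglongrightarrow> 0"
  proof (rule conv0)
    fix \<epsilon> :: real assume "\<epsilon> > 0"
    define e where "e = \<epsilon> / 8"
    have e0: "e > 0" using \<open>\<epsilon> > 0\<close> unfolding e_def by simp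
    obtain \<delta> where dl: "\<delta> > 0" "\<forall>s\<in>{0..\<zeta>}. \<forall>x\<in>{0..real K}. \<forall>y\<in>{0..real K}. \<bar>x - y\<bar> < \<delta> \<longrightarrow> \<bar>w s x - w s y\<bar> < e"
      using uc[OF e0] by blast
    obtain N1 where N1: "\<forall>n\<ge>N1. norm (eh n - 0) < min \<delta> 1"
      using LIMSEQ_D[OF ehl, of "min \<delta> 1"] dl(1) by force
    obtain N2 where N2: "\<forall>n\<ge>N2. norm (2^(K+1) * ew n - 0) < min e 1"
      using LIMSEQ_D[OF ewl2, of "min e 1"] e0 by force
    show "\<exists>N. \<forall>n\<ge>N. 0 \<le> (SUP p\<in>{0..\<zeta>}\<times>{0..\<zeta>}.
              \<bar>d_snake (hn n) (wn n) (fst p) (snd p) - d_snake h w (fst p) (snd p)\<bar>) \<and>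
       (SUP p\<in>{0..\<zeta>}\<times>{0..\<zeta>}.
              \<bar>d_snake (hn n) (wn n) (fst p) (snd p) - d_snake h w (fst p) (snd p)\<bar>) \<le> \<epsilon>"
    proof (intro exI[of _ "max N1 N2"] allI impI)
      fix n assume n: "max N1 N2 \<le> n"
      have ehn: "eh n < min \<delta> 1" using N1 n eh0[of n] by auto
      have ewn: "2^(K+1) * ew n < min e 1" using N2 n ew0[of n] by auto
      have hK: "0 \<le> h s \<and> h s \<le> real K" if "s \<in> {0..\<zeta>}" for s using h0 B KB that by force
      have hnK: "0 \<le> hn n s \<and> hn n s \<le> real K" if "s \<in> {0..\<zeta>}" for s
      proof -
        have "h s \<le> B" "0 \<le> hn n s" using B hn0[of n] that by auto
        moreover have "eh n < 1" using ehn by simp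
        ultimately show ?thesis using ehb[OF that, of n] KB by linarith
      qed
      have hnd: "\<bar>hn n s - h s\<bar> < \<delta>" if "s \<in> {0..\<zeta>}" for s
        using ehb[OF that, of n] ehn by linarith
      have wc: "\<bar>wn n s r - w s r\<bar> \<le> e" if "s \<in> {0..\<zeta>}" "r \<in> {0..real K}" for s r
        using wclose[of n s r] that ewn by linarith
      have top: "\<bar>wn n s (hn n s) - w s (h s)\<bar> \<le> 2 * e" if s: "s \<in> {0..\<zeta>}" for s
      proof -
        have "\<bar>wn n s (hn n s) - w s (hn n s)\<bar> \<le> e" using wc[OF s] hnK[OF s] by auto
        moreover have "\<bar>w s (hn n s) - w s (h s)\<bar> < e" using dl(2) s hnK[OF s] hK[OF s] hnd[OF s] by auto
        ultimately show ?thesis by linarith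
      qed
      have inf: "\<bar>(INF r\<in>{m_h (hn n) s1 s2..hn n s1}. wn n s1 r) - (INF r\<in>{m_h h s1 s2..h s1}. w s1 r)\<bar> \<le> 2 * e"
        if s1: "s1 \<in> {0..\<zeta>}" and s2: "s2 \<in> {0..\<zeta>}" for s1 s2
      proof -
        have m1: "0 \<le> m_h (hn n) s1 s2 \<and> m_h (hn n) s1 s2 \<le> hn n s1"
          using mprops[OF hnc hn0 s1 s2] by blast
        have m2: "0 \<le> m_h h s1 s2 \<and> m_h h s1 s2 \<le> h s1"
          using mprops[OF assms(3) _ s1 s2] h0 by blast
        have c1: "continuous_on {0..real K} (w s1)"
          using assms(4) s1 unfolding C0_def by (meson atLeastAtMost_iff atLeast_iff continuous_on_subset subsetI)
        have c2: "continuous_on {0..real K} (wn n s1)"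
          using wnC0[of n] s1 unfolding C0_def by (meson atLeastAtMost_iff atLeast_iff continuous_on_subset subsetI)
        show ?thesis
        proof (rule inf_close[where K="real K" and \<delta>=\<delta>])
          show "m_h h s1 s2 \<le> h s1" "m_h (hn n) s1 s2 \<le> hn n s1" "0 \<le> m_h h s1 s2"
            "0 \<le> m_h (hn n) s1 s2" using m1 m2 by auto
          show "h s1 \<le> real K" "hn n s1 \<le> real K" using hK[OF s1] hnK[OF s1] by auto
          show "\<bar>m_h h s1 s2 - m_h (hn n) s1 s2\<bar> < \<delta>" using mclose[OF s1 s2, of n] ehn by linarith
          show "\<bar>h s1 - hn n s1\<bar> < \<delta>" using hnd[OF s1] by linarith
          show "bdd_below (w s1 ` {m_h h s1 s2..h s1})"
            by (rule cont_bdd(1)[OF c1]) (use m2 hK[OF s1] in auto)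
          show "bdd_below (wn n s1 ` {m_h (hn n) s1 s2..hn n s1})"
            by (rule cont_bdd(1)[OF c2]) (use m1 hnK[OF s1] in auto)
          show "\<forall>x\<in>{0..real K}. \<forall>y\<in>{0..real K}. \<bar>x - y\<bar> < \<delta> \<longrightarrow> \<bar>w s1 x - w s1 y\<bar> < e"
            using dl(2) s1 by blast
          show "\<forall>x\<in>{0..real K}. \<bar>wn n s1 x - w s1 x\<bar> \<le> e" using wc[OF s1] by blast
        qed
      qed
      have msym: "m_h f s1 s2 = m_h f s2 s1" for f :: "real \<Rightarrow> real" and s1 s2
        unfolding m_h_def by (simp add: min.commute max.commute)
      show "0 \<le> (SUP p\<in>{0..\<zeta>}\<times>{0..\<zeta>}.
              \<bar>d_snake (hn n) (wn n) (fst p) (snd p) - d_snake h w (fst p) (snd p)\<bar>) \<and>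
       (SUP p\<in>{0..\<zeta>}\<times>{0..\<zeta>}.
              \<bar>d_snake (hn n) (wn n) (fst p) (snd p) - d_snake h w (fst p) (snd p)\<bar>) \<le> \<epsilon>"
      proof (rule sup_small)
        show "{0..\<zeta>}\<times>{0..\<zeta>} \<noteq> {}" using assms(1) by auto
        fix p :: "real \<times> real" assume p: "p \<in> {0..\<zeta>}\<times>{0..\<zeta>}"
        have s1: "fst p \<in> {0..\<zeta>}" and s2: "snd p \<in> {0..\<zeta>}" using p by auto
        have "\<bar>M_hw (hn n) (wn n) (fst p) (snd p) - M_hw h w (fst p) (snd p)\<bar> \<le> 2 * e"
          using inf[OF s1 s2] inf[OF s2 s1] unfolding M_hw_def msym[of _ "snd p" "fst p"]
          by (auto simp: min_def abs_if)
        hence "\<bar>d_snake (hn n) (wn n) (fst p) (snd p) - d_snake h w (fst p) (snd p)\<bar> \<le> 8 * e"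
          using top[OF s1] top[OF s2] unfolding d_snake_def by linarith
        thus "0 \<le> \<bar>d_snake (hn n) (wn n) (fst p) (snd p) - d_snake h w (fst p) (snd p)\<bar> \<and>
          \<bar>d_snake (hn n) (wn n) (fst p) (snd p) - d_snake h w (fst p) (snd p)\<bar> \<le> \<epsilon>"
          unfolding e_def by auto
      qed
    qed
  qed
  show ?thesis using part1 part2 by blast
qed

end
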